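(* Let $\Gamma$ be a finite alphabet and $n\ge2$, and fix a bijection between $\Gamma^{n-1}$ and $\{1,\dots,|\Gamma|^{n-1}\}$ giving one-hot encodings $\mathbb 1(g_1\cdots g_{n-1})\in\{0,1\}^{|\Gamma|^{n-1}}$. There exists a function $F=M\circ N$, where $N(a)=a/\|a\|_1$ and $M$ is a ReLU MLP, such that for every string $w=w_1\cdots w_T\in\Gamma^T$ and every $s$ with $n-1\le s\le T$, $$F(A_s)=\mathbb 1(w_{s-n+2}\cdots w_s),$$ the one-hot encoding of the last $n-1$ symbols up to position $s$.
   Context: Let $\mathbb 1(g)\in\{0,1\}^{|\Gamma|}$ be the one-hot encoding of $g\in\Gamma$, and for $n-1\le s\le T$ let $A_s=\frac{1}{n-1}\sum_{j=s-n+2}^{s}10^{-j}\mathbb 1(w_j)$ (the output at position $s$ of a single hard-attention head that attends uniformly to the last $n-1$ positions with values $10^{-j}\mathbb 1(w_j)$). A ReLU MLP with $k$ hidden layers is a map $x\mapsto W_{k+1}\,\mathrm{ReLU}(W_k\cdots\mathrm{ReLU}(W_1x+b_1)\cdots+b_k)+b_{k+1}$ with real matrices $W_i$ and vectors $b_i$, where $\mathrm{ReLU}$ acts entrywise as $\max(0,\cdot)$. *)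

theory Defs
  imports Complex_Main
begin

definition relu :: "real \<Rightarrow> real" where
  "relu x = max 0 x"

text \<open>Layers after the first: each entry (d, W, b) applies ReLU to the first d coordinates
  of the previous pre-activation vector (a hidden layer of width d), followed by the affine
  map W, b.\<close>
fun apply_layers :: "(nat \<times> (nat \<Rightarrow> nat \<Rightarrow> real) \<times> (nat \<Rightarrow> real)) list
    \<Rightarrow> (nat \<Rightarrow> real) \<Rightarrow> (nat \<Rightarrow> real)" where
  "apply_layers [] y = y"
| "apply_layers ((d, W, b) # L) y =
     apply_layers L (\<lambda>j. (\<Sum>i<d. W j i * relu (y i)) + b j)"

text \<open>A ReLU MLP with input in R^Gamma (coordinates indexed by the alphabet) and real vector
  output: x \<mapsto> W_{k+1} ReLU(W_k ... ReLU(W_1 x + b_1) ... + b_k) + b_{k+1}.\<close>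
definition is_relu_mlp :: "(('g::finite \<Rightarrow> real) \<Rightarrow> (nat \<Rightarrow> real)) \<Rightarrow> bool" where
  "is_relu_mlp M \<longleftrightarrow>
     (\<exists>(W1 :: nat \<Rightarrow> 'g \<Rightarrow> real) (b1 :: nat \<Rightarrow> real) L.
        M = (\<lambda>x. apply_layers L (\<lambda>j. (\<Sum>g\<in>UNIV. W1 j g * x g) + b1 j)))"

definition onehot :: "'g \<Rightarrow> ('g \<Rightarrow> real)" where
  "onehot a = (\<lambda>g. if g = a then 1 else 0)"

definition l1_normalize :: "('g::finite \<Rightarrow> real) \<Rightarrow> ('g \<Rightarrow> real)" where
  "l1_normalize a = (\<lambda>g. a g / (\<Sum>h\<in>UNIV. \<bar>a h\<bar>))"

text \<open>Attention output A_s = 1/(n-1) * sum_{j=s-n+2}^{s} 10^{-j} 1(w_j); positions are 1-based.\<close>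
definition attn_out :: "nat \<Rightarrow> (nat \<Rightarrow> 'g) \<Rightarrow> nat \<Rightarrow> ('g \<Rightarrow> real)" where
  "attn_out n w s = (\<lambda>g. (1 / real (n - 1)) *
      (\<Sum>j\<in>{s + 2 - n..s}. (1 / 10) ^ j * onehot (w j) g))"

definition onehot_gram :: "('g list \<Rightarrow> nat) \<Rightarrow> 'g list \<Rightarrow> (nat \<Rightarrow> real)" where
  "onehot_gram enc xs = (\<lambda>j. if j = enc xs then 1 else 0)"

end

theory Submission
  imports Defs
begin

fun Y :: "'g list \<Rightarrow> 'g \<Rightarrow> real" where
  "Y [] g = 0"
| "Y (x # l) g = onehot x g + Y l g / 10"

lemma Y_nonneg: "0 \<le> Y l g"
  by (induction l) (auto simp: onehot_def)

lemma Y_less: "Y l g < 10 / 9"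
  by (induction l) (auto simp: onehot_def)

definition sY :: "'g::finite list \<Rightarrow> real" where
  "sY l = (\<Sum>h\<in>UNIV. Y l h)"

lemma sum_onehot: "(\<Sum>h\<in>(UNIV::'g::finite set). onehot x h) = 1"
  unfolding onehot_def by simp

lemma sY_Cons: "sY (x # l) = 1 + sY l / 10"
  unfolding sY_def by (simp add: sum.distrib sum_onehot sum_divide_distrib)

lemma sY_nonneg: "0 \<le> sY l"
  unfolding sY_def by (simp add: sum_nonneg Y_nonneg)

lemma sY_len: fixes a b :: "'g::finite list" shows "length a = length b \<Longrightarrow> sY a = sY b"
proof (induction a arbitrary: b)
  case Nil thus ?case by simp
next
  case (Cons x a)
  then obtain y b' where b: "b = y # b'" and len: "length a = length b'" by (cases b) auto
  have "sY a = sY b'" using Cons.IH len by blast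
  thus ?case unfolding b sY_Cons by simp
qed

lemma sY_pos: "l \<noteq> [] \<Longrightarrow> sY l > 0"
proof (cases l)
  case (Cons x l') thus ?thesis using sY_nonneg[of l'] by (simp add: sY_Cons)
qed auto

lemma Y_inj: fixes a b :: "'g list" shows "length a = length b \<Longrightarrow> Y a = Y b \<Longrightarrow> a = b"
proof (induction a arbitrary: b)
  case Nil thus ?case by simp
next
  case (Cons x a)
  then obtain y b' where b: "b = y # b'" and len: "length a = length b'" by (cases b) auto
  have eq: "\<And>g. onehot x g + Y a g / 10 = onehot y g + Y b' g / 10"
    using Cons.prems(2) b by (metis Y.simps(2))
  have "x = y"
  proof (rule ccontr)
    assume "x \<noteq> y"
    with eq[of x] have "1 + Y a x / 10 = Y b' x / 10" by (simp add: onehot_def)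
    moreover have "Y a x \<ge> 0" "Y b' x < 10/9" by (rule Y_nonneg, rule Y_less)
    ultimately show False by linarith
  qed
  with eq have "Y a = Y b'" by (auto simp: fun_eq_iff)
  with Cons.IH len have "a = b'" by blast
  with \<open>x = y\<close> b show ?case by simp
qed

lemma sum_window: "(\<Sum>j\<in>{m..<m+k}. (1/10)^j * onehot (w j) g) = (1/10)^m * Y (map w [m..<m+k]) g"
proof (induction k arbitrary: m)
  case 0 show ?case by simp
next
  case (Suc k)
  have s: "{m..<m+Suc k} = insert m {Suc m..<Suc m + k}" by auto
  have l: "[m..<m+Suc k] = m # [Suc m..<Suc m + k]" by (simp add: upt_conv_Cons)
  have "(\<Sum>j\<in>{m..<m+Suc k}. (1/10)^j * onehot (w j) g) =
     (1/10)^m * onehot (w m) g + (\<Sum>j\<in>{Suc m..<Suc m+k}. (1/10)^j * onehot (w j) g)"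
    unfolding s by (subst sum.insert) auto
  also have "\<dots> = (1/10)^m * onehot (w m) g + (1/10)^(Suc m) * Y (map w [Suc m..<Suc m+k]) g"
    by (simp only: Suc.IH)
  also have "\<dots> = (1/10)^m * Y (map w [m..<m+Suc k]) g"
    by (simp only: l list.map Y.simps) (simp add: algebra_simps)
  finally show ?case .
qed

lemma sep:
  fixes F :: "('g::finite \<Rightarrow> real) set"
  shows "finite F \<Longrightarrow> (\<lambda>_. 0) \<notin> F \<Longrightarrow> \<exists>a. \<forall>v\<in>F. (\<Sum>g\<in>UNIV. a g * v g) \<noteq> 0"
proof (induction F rule: finite_induct)
  case empty show ?case by simp
next
  case (insert v F)
  define ip where "ip a u = (\<Sum>g\<in>UNIV. a g * u g)" for a u :: "'g \<Rightarrow> real"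
  obtain a where a: "\<forall>u\<in>F. ip a u \<noteq> 0" using insert unfolding ip_def by auto
  have "v \<noteq> (\<lambda>_. 0)" using insert by auto
  then obtain g0 where g0: "v g0 \<noteq> 0" by auto
  have "ip v v \<ge> v g0 * v g0"
    unfolding ip_def by (rule member_le_sum) auto
  moreover have "v g0 * v g0 > 0" by (metis g0 linorder_neq_iff mult_neg_neg mult_pos_pos)
  ultimately have vv: "ip v v \<noteq> 0" by linarith
  have ok: "\<forall>u\<in>insert v F. ip a u \<noteq> 0 \<or> ip v u \<noteq> 0" using a vv by auto
  define Bad where "Bad = (\<lambda>u. - ip a u / ip v u) ` insert v F"
  have "finite Bad" unfolding Bad_def using insert by simp
  then obtain e :: real where e: "e \<notin> Bad"
    using ex_new_if_finite[OF infinite_UNIV_char_0] by blast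
  define a' where "a' = (\<lambda>g. a g + e * v g)"
  have ip': "ip a' u = ip a u + e * ip v u" for u
    unfolding ip_def a'_def by (simp add: sum.distrib sum_distrib_left algebra_simps)
  have "\<forall>u\<in>insert v F. ip a' u \<noteq> 0"
  proof
    fix u assume u: "u \<in> insert v F"
    show "ip a' u \<noteq> 0"
    proof
      assume z: "ip a' u = 0"
      show False
      proof (cases "ip v u = 0")
        case True thus False using z ok u ip' by auto
      next
        case False
        hence "e = - ip a u / ip v u" using z ip'[of u] by (simp add: field_simps)
        thus False using e u unfolding Bad_def by auto
      qed
    qed
  qed
  thus ?case unfolding ip_def by blast
qed

lemma relu_abs: "relu a + relu (- a) = \<bar>a\<bar>"
  unfolding relu_def by auto

lemma sum_pair:
  fixes c :: real and f :: "nat \<Rightarrow> real"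
  assumes "j \<le> K"
  shows "(\<Sum>i<2*K+2. (if i div 2 = j then c else 0) * f i) = c * (f (2*j) + f (Suc (2*j)))"
proof -
  have "(\<Sum>i<2*K+2. (if i div 2 = j then c else 0) * f i) = (\<Sum>i\<in>{..<2*K+2}. if i div 2 = j then c * f i else 0)"
    by (rule sum.cong) auto
  also have "\<dots> = sum (\<lambda>i. c * f i) {i\<in>{..<2*K+2}. i div 2 = j}"
    by (rule sum.inter_filter[symmetric]) simp
  also have "{i\<in>{..<2*K+2}. i div 2 = j} = {2*j, Suc (2*j)}"
    using assms by auto
  finally show ?thesis by (simp add: algebra_simps)
qed

definition Pn :: "'g::finite list \<Rightarrow> 'g \<Rightarrow> real" where
  "Pn l = (\<lambda>g. Y l g / sY l)"

lemma attn_norm: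
  fixes w :: "nat \<Rightarrow> 'g::finite"
  assumes n: "n \<ge> 2" and s: "n - 1 \<le> s"
  shows "l1_normalize (attn_out n w s) = Pn (map w [s + 2 - n..<s + 1])"
proof -
  define m where "m = s + 2 - n"
  define l where "l = map w [m..<m + (n - 1)]"
  have e1: "{s + 2 - n..s} = {m..<m + (n - 1)}" using n s unfolding m_def by auto
  have eq: "s + 1 = m + (n - 1)" using n s unfolding m_def by simp
  have e2: "[s + 2 - n..<s + 1] = [m..<m + (n - 1)]"
    unfolding m_def[symmetric] eq by (rule refl)
  define c where "c = (1 / real (n - 1)) * (1/10)^m"
  have c: "c > 0" using n unfolding c_def by simp
  have A: "attn_out n w s = (\<lambda>g. c * Y l g)"
    unfolding attn_out_def e1 sum_window l_def c_def by (simp add: fun_eq_iff)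
  have "(\<Sum>h\<in>UNIV. \<bar>c * Y l h\<bar>) = c * sY l"
    unfolding sY_def sum_distrib_left by (rule sum.cong) (use c in \<open>auto simp: abs_mult Y_nonneg\<close>)
  hence "l1_normalize (attn_out n w s) = Pn l"
    unfolding l1_normalize_def A Pn_def using c by (simp add: fun_eq_iff)
  thus ?thesis unfolding e2 l_def m_def .
qed

theorem lemmaB12:
  fixes n :: nat and enc :: "'g::finite list \<Rightarrow> nat"
  assumes "n \<ge> 2"
    and "bij_betw enc {xs. length xs = n - 1} {1..card (UNIV :: 'g set) ^ (n - 1)}"
  shows "\<exists>M. is_relu_mlp M \<and>
    (\<forall>(w :: nat \<Rightarrow> 'g) (T :: nat) (s :: nat). n - 1 \<le> s \<and> s \<le> T \<longrightarrow>
       (\<forall>j\<in>{1..card (UNIV :: 'g set) ^ (n - 1)}.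
          M (l1_normalize (attn_out n w s)) j = onehot_gram enc (map w [s + 2 - n..<s + 1]) j))"
proof -
  define K where "K = card (UNIV :: 'g set) ^ (n - 1)"
  define G where "G = {xs::'g list. length xs = n - 1}"
  have finG: "finite G" unfolding G_def using finite_lists_length_eq[OF finite_UNIV, of "n-1"] by simp
  have Pinj: "a = b" if "a \<in> G" "b \<in> G" "Pn a = Pn b" for a b
  proof -
    have len: "length a = length b" using that unfolding G_def by simp
    have "a \<noteq> []" using that assms(1) unfolding G_def by auto
    hence pos: "sY a > 0" by (rule sY_pos)
    have "sY a = sY b" using len by (rule sY_len)
    hence "Y a = Y b" using that(3) pos unfolding Pn_def by (auto simp: fun_eq_iff)
    thus ?thesis using len Y_inj by blast
  qed
  define PR where "PR = {(a,b). a \<in> G \<and> b \<in> G \<and> a \<noteq> b}"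
  have finPR: "finite PR" unfolding PR_def
    by (rule finite_subset[of _ "G \<times> G"]) (use finG in auto)
  define F where "F = (\<lambda>(a,b). (\<lambda>g. Pn a g - Pn b g)) ` PR"
  have "finite F" unfolding F_def using finPR by simp
  moreover have "(\<lambda>_. 0) \<notin> F"
  proof
    assume "(\<lambda>_. 0) \<in> F"
    then obtain a b where "(a,b) \<in> PR" "(\<lambda>g. Pn a g - Pn b g) = (\<lambda>_. 0)" unfolding F_def by auto
    hence "a \<in> G" "b \<in> G" "a \<noteq> b" "Pn a = Pn b" unfolding PR_def by (auto simp: fun_eq_iff)
    thus False using Pinj by blast
  qed
  ultimately obtain ua where ua: "\<forall>v\<in>F. (\<Sum>g\<in>UNIV. ua g * v g) \<noteq> 0" using sep by blast
  define t where "t l = (\<Sum>g\<in>UNIV. ua g * Pn l g)" for l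
  have tdist: "t a \<noteq> t b" if "a \<in> G" "b \<in> G" "a \<noteq> b" for a b
  proof -
    have "(\<lambda>g. Pn a g - Pn b g) \<in> F" using that unfolding F_def PR_def by auto
    from bspec[OF ua this] have "(\<Sum>g\<in>UNIV. ua g * (Pn a g - Pn b g)) \<noteq> 0" by simp
    thus ?thesis unfolding t_def by (simp add: right_diff_distrib sum_subtractf)
  qed
  define D where "D = insert 1 ((\<lambda>(a,b). \<bar>t a - t b\<bar>) ` PR)"
  define \<delta> where "\<delta> = Min D"
  have finD: "finite D" unfolding D_def using finPR by simp
  have dpos: "\<delta> > 0" unfolding \<delta>_def using finD
    by (subst Min_gr_iff) (auto simp: D_def PR_def dest: tdist)
  have dle: "\<delta> \<le> \<bar>t a - t b\<bar>" if "a \<in> G" "b \<in> G" "a \<noteq> b" for a b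
    unfolding \<delta>_def using finD that by (intro Min_le) (auto simp: D_def PR_def)
  define dec where "dec = the_inv_into G enc"
  have bij: "bij_betw enc G {1..K}" using assms(2) unfolding G_def K_def .
  have decG: "dec k \<in> G" and encdec: "enc (dec k) = k" if "k \<in> {1..K}" for k
    using that bij unfolding dec_def bij_betw_def
    by (auto intro: the_inv_into_into f_the_inv_into_f)
  have decenc: "dec (enc l) = l" if "l \<in> G" for l
    using that bij unfolding dec_def bij_betw_def by (simp add: the_inv_into_f_f)
  define tk where "tk k = t (dec k)" for k
  define W1 :: "nat \<Rightarrow> 'g \<Rightarrow> real" where "W1 i g = (if even i then ua g else - ua g)" for i g
  define b1 :: "nat \<Rightarrow> real" where "b1 i = (if even i then - tk (i div 2) else tk (i div 2))" for i
  define WA :: "nat \<Rightarrow> nat \<Rightarrow> real" where "WA j i = (if i div 2 = j then - 1 / \<delta> else 0)" for j i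
  define WB :: "nat \<Rightarrow> nat \<Rightarrow> real" where "WB j i = (if i = j then 1 else 0)" for j i
  define L where "L = [(2*K+2, WA, \<lambda>_::nat. 1::real), (K+1, WB, \<lambda>_::nat. 0::real)]"
  define M where "M = (\<lambda>x::'g \<Rightarrow> real. apply_layers L (\<lambda>j. (\<Sum>g\<in>UNIV. W1 j g * x g) + b1 j))"
  have mlp: "is_relu_mlp M" unfolding is_relu_mlp_def M_def by blast
  have Mval: "M x j = relu (1 - \<bar>(\<Sum>g\<in>UNIV. ua g * x g) - tk j\<bar> / \<delta>)" if "j \<le> K" for x j
  proof -
    define u where "u = (\<Sum>g\<in>UNIV. ua g * x g)"
    define y0 where "y0 = (\<lambda>j. (\<Sum>g\<in>UNIV. W1 j g * x g) + b1 j)"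
    have y0a: "y0 (2*j) = u - tk j" unfolding y0_def W1_def b1_def u_def by simp
    have y0b: "y0 (Suc (2*j)) = - (u - tk j)" unfolding y0_def W1_def b1_def u_def by (simp add: sum_negf)
    define y1 where "y1 = (\<lambda>j. (\<Sum>i<2*K+2. WA j i * relu (y0 i)) + 1)"
    have y1j: "y1 j = 1 - \<bar>u - tk j\<bar> / \<delta>"
      unfolding y1_def WA_def sum_pair[OF that] y0a y0b relu_abs by simp
    have "M x j = (\<Sum>i<K+1. WB j i * relu (y1 i))"
      unfolding M_def L_def y1_def y0_def by simp
    also have "\<dots> = (\<Sum>i\<in>{..<K+1}. if i = j then relu (y1 i) else 0)"
      unfolding WB_def by (rule sum.cong) auto
    also have "\<dots> = relu (y1 j)" using that by (subst sum.delta) auto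
    finally show ?thesis using y1j u_def by simp
  qed
  show ?thesis
  proof (intro exI conjI allI impI ballI)
    show "is_relu_mlp M" by (rule mlp)
    fix w :: "nat \<Rightarrow> 'g" and T s j
    assume st: "n - 1 \<le> s \<and> s \<le> T" and j: "j \<in> {1..card (UNIV :: 'g set) ^ (n - 1)}"
    define l where "l = map w [s + 2 - n..<s + 1]"
    have lG: "l \<in> G" unfolding l_def G_def using st assms(1) by auto
    have jK: "j \<in> {1..K}" using j unfolding K_def .
    have "M (l1_normalize (attn_out n w s)) j = relu (1 - \<bar>t l - tk j\<bar> / \<delta>)"
      unfolding attn_norm[OF assms(1) conjunct1[OF st]] l_def[symmetric]
      using Mval[of j "Pn l"] jK by (simp add: t_def)
    also have "\<dots> = onehot_gram enc l j"
    proof (cases "j = enc l")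
      case True
      thus ?thesis unfolding tk_def onehot_gram_def using decenc[OF lG] by (simp add: relu_def)
    next
      case False
      hence ne: "l \<noteq> dec j" using encdec[OF jK] by auto
      have "\<delta> \<le> \<bar>t l - tk j\<bar>" unfolding tk_def using dle[OF lG decG[OF jK] ne] .
      hence "\<bar>t l - tk j\<bar> / \<delta> \<ge> 1" using dpos by simp
      thus ?thesis unfolding onehot_gram_def relu_def using False by simp
    qed
    finally show "M (l1_normalize (attn_out n w s)) j = onehot_gram enc (map w [s + 2 - n..<s + 1]) j"
      unfolding l_def .
  qed
qed

end
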